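(* Let $f$ and $\tau$ be as in the context. Suppose that for some $x\in\mathbb T^1$, $n\in\mathbb N$ and inverse branches $h_1,h_2\in\mathcal H^n$ with $x$ in both their domains, $$DF^n_{h_1(x)}\mathcal K_\eta\cap DF^n_{h_2(x)}\mathcal K_\eta=\{0\}.$$ Then there exists $C_0=C_0(n,x)>0$ such that $|(\tau_n\circ h_1)'(x)-(\tau_n\circ h_2)'(x)|>C_0$.
   Context: $\alpha\in(0,1)$, $\mathbb T^1=\mathbb R/\mathbb Z$. $f:\mathbb T^1\to\mathbb T^1$ is piecewise $C^{1+\alpha}$ on a countable partition into open intervals, with inverse branches $\mathcal H^n$ of $f^n$, partition $\{O_h\}_{h\in\mathcal H^n}$, $h:f^n(O_h)\to O_h$, $|(f^n)'|\ge e^{\lambda n}$ with $\lambda>\ln2$. $\tau:\mathbb T^1\to\mathbb R$ is piecewise $C^1$ with $|(\tau_n\circ h)'|\le C_\tau$ for all $n$, $h\in\mathcal H^n$, where $\tau_n=\sum_{j<n}\tau\circ f^j$. $F(x,y)=(f(x),y+\tau(x))$, $DF_{(x,y)}=\begin{pmatrix}f'(x)&0\\\tau'(x)&1\end{pmatrix}$ (independent of $y$), $DF^n_x=DF_{f^{n-1}x}\cdots DF_x$. $\eta=\|\tau'/f'\|_\infty/(1-\|1/f'\|_\infty)$, $\mathcal K_\eta=\{(u,v):|v|\le\eta|u|\}$. *)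

theory Defs
  imports "HOL-Analysis.Analysis"
begin

(* Model of T^1 = R/Z: points are reals, functions on T^1 are 1-periodic functions
   on R.  The map f : T^1 -> T^1 is represented by a 1-periodic f : real => real whose
   values are read modulo 1 (so f is locally a lift and derivatives make sense). *)

definition periodic1 :: "(real \<Rightarrow> real) \<Rightarrow> bool" where
  "periodic1 g \<longleftrightarrow> (\<forall>x. g (x + 1) = g x)"

(* countable partition of T^1 into open intervals, lifted to R (translation invariant),
   covering T^1 up to a Lebesgue null set *)
definition interval_partition :: "real set set \<Rightarrow> bool" where
  "interval_partition P \<longleftrightarrow>
     countable P \<and>
     (\<forall>I\<in>P. \<exists>a b. a < b \<and> b - a \<le> 1 \<and> I = {a<..<b}) \<and>
     (\<forall>I\<in>P. (\<lambda>x. x + 1) ` I \<in> P \<and> (\<lambda>x. x - 1) ` I \<in> P) \<and>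
     (\<forall>I\<in>P. \<forall>J\<in>P. I \<noteq> J \<longrightarrow> I \<inter> J = {}) \<and>
     (UNIV - \<Union>P) \<in> null_sets lborel"

definition piecewise_C1_alpha :: "real \<Rightarrow> (real \<Rightarrow> real) \<Rightarrow> real set set \<Rightarrow> bool" where
  "piecewise_C1_alpha \<alpha> g P \<longleftrightarrow>
     (\<forall>I\<in>P. (\<forall>x\<in>I. g differentiable (at x)) \<and>
        (\<exists>C. \<forall>x\<in>I. \<forall>y\<in>I. \<bar>deriv g x - deriv g y\<bar> \<le> C * \<bar>x - y\<bar> powr \<alpha>))"

definition piecewise_C1 :: "(real \<Rightarrow> real) \<Rightarrow> real set set \<Rightarrow> bool" where
  "piecewise_C1 g P \<longleftrightarrow>
     (\<forall>I\<in>P. (\<forall>x\<in>I. g differentiable (at x)) \<and> continuous_on I (deriv g))"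

definition injective_mod1_on_pieces :: "(real \<Rightarrow> real) \<Rightarrow> real set set \<Rightarrow> bool" where
  "injective_mod1_on_pieces g P \<longleftrightarrow>
     (\<forall>I\<in>P. \<forall>x\<in>I. \<forall>y\<in>I. g x - g y \<in> \<int> \<longrightarrow> x = y)"

(* the partition {O_h} for f^n: the (nonempty) n-cylinders *)
definition cylinders :: "(real \<Rightarrow> real) \<Rightarrow> real set set \<Rightarrow> nat \<Rightarrow> real set set" where
  "cylinders f P n = {Q. Q \<noteq> {} \<and>
     (\<exists>Is :: nat \<Rightarrow> real set. (\<forall>j<n. Is j \<in> P) \<and> Q = {x. \<forall>j<n. (f ^^ j) x \<in> Is j})}"

(* domain f^n(O_h) (as a subset of T^1, lifted to R) and the inverse branch h *)
definition branch_dom :: "(real \<Rightarrow> real) \<Rightarrow> nat \<Rightarrow> real set \<Rightarrow> real set" where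
  "branch_dom f n Q = {z. \<exists>y\<in>Q. (f ^^ n) y - z \<in> \<int>}"

definition branch :: "(real \<Rightarrow> real) \<Rightarrow> nat \<Rightarrow> real set \<Rightarrow> real \<Rightarrow> real" where
  "branch f n Q z = (THE y. y \<in> Q \<and> (f ^^ n) y - z \<in> \<int>)"

definition tau_n :: "(real \<Rightarrow> real) \<Rightarrow> (real \<Rightarrow> real) \<Rightarrow> nat \<Rightarrow> real \<Rightarrow> real" where
  "tau_n f \<tau> n x = (\<Sum>j<n. \<tau> ((f ^^ j) x))"

definition DF :: "(real \<Rightarrow> real) \<Rightarrow> (real \<Rightarrow> real) \<Rightarrow> real \<Rightarrow> real \<times> real \<Rightarrow> real \<times> real" where
  "DF f \<tau> x = (\<lambda>(u, v). (deriv f x * u, deriv \<tau> x * u + v))"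

primrec DFn :: "(real \<Rightarrow> real) \<Rightarrow> (real \<Rightarrow> real) \<Rightarrow> nat \<Rightarrow> real \<Rightarrow> real \<times> real \<Rightarrow> real \<times> real" where
  "DFn f \<tau> 0 x = id"
| "DFn f \<tau> (Suc n) x = DF f \<tau> ((f ^^ n) x) \<circ> DFn f \<tau> n x"

(* sup norm over the (full measure) union of the partition intervals *)
definition supnorm :: "(real \<Rightarrow> real) \<Rightarrow> real set set \<Rightarrow> real" where
  "supnorm g P = Sup ((\<lambda>x. \<bar>g x\<bar>) ` \<Union>P)"

definition eta :: "(real \<Rightarrow> real) \<Rightarrow> (real \<Rightarrow> real) \<Rightarrow> real set set \<Rightarrow> real" where
  "eta f \<tau> P = supnorm (\<lambda>x. deriv \<tau> x / deriv f x) P / (1 - supnorm (\<lambda>x. 1 / deriv f x) P)"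

definition cone :: "real \<Rightarrow> (real \<times> real) set" where
  "cone \<eta> = {(u, v). \<bar>v\<bar> \<le> \<eta> * \<bar>u\<bar>}"

end

theory Submission
  imports Defs
begin

lemma inv_strong:
  fixes f :: "real \<Rightarrow> real"
  shows "\<lbrakk>DERIV f x :> f'; f' \<noteq> 0; open S; x \<in> S; continuous_on S f;
         \<And>z. z \<in> S \<Longrightarrow> g (f z) = z\<rbrakk>
         \<Longrightarrow> DERIV g (f x) :> inverse (f')"
  unfolding has_field_derivative_def
  by (rule has_derivative_inverse_strong [of S x f g]) auto

definition Ap :: "(real \<Rightarrow> real) \<Rightarrow> nat \<Rightarrow> real \<Rightarrow> real" where
  "Ap f m y = (\<Prod>j<m. deriv f ((f^^j) y))"
definition Bs :: "(real \<Rightarrow> real) \<Rightarrow> (real \<Rightarrow> real) \<Rightarrow> nat \<Rightarrow> real \<Rightarrow> real" where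
  "Bs f \<tau> m y = (\<Sum>j<m. deriv \<tau> ((f^^j) y) * Ap f j y)"

lemma derivs:
  assumes "\<forall>j<m. f differentiable at ((f^^j) y) \<and> \<tau> differentiable at ((f^^j) y)"
  shows "DERIV (f^^m) y :> Ap f m y \<and> DERIV (tau_n f \<tau> m) y :> Bs f \<tau> m y
     \<and> DFn f \<tau> m y = (\<lambda>(u,v). (Ap f m y * u, Bs f \<tau> m y * u + v))"
  using assms
proof (induction m)
  case 0
  have t: "tau_n f \<tau> 0 = (\<lambda>_. 0)" by (auto simp: tau_n_def)
  show ?case by (auto simp: Ap_def Bs_def t id_def intro!: derivative_eq_intros)
next
  case (Suc m)
  then have IH: "DERIV (f^^m) y :> Ap f m y" "DERIV (tau_n f \<tau> m) y :> Bs f \<tau> m y"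
     "DFn f \<tau> m y = (\<lambda>(u,v). (Ap f m y * u, Bs f \<tau> m y * u + v))" by auto
  have df: "DERIV f ((f^^m) y) :> deriv f ((f^^m) y)" and dt: "DERIV \<tau> ((f^^m) y) :> deriv \<tau> ((f^^m) y)"
    using Suc.prems DERIV_deriv_iff_real_differentiable by auto
  have e1: "(f^^Suc m) = (\<lambda>z. f ((f^^m) z))" by auto
  have e2: "tau_n f \<tau> (Suc m) = (\<lambda>z. tau_n f \<tau> m z + \<tau> ((f^^m) z))"
    by (auto simp: tau_n_def)
  have A: "Ap f (Suc m) y = deriv f ((f^^m) y) * Ap f m y" by (simp add: Ap_def mult.commute)
  have B: "Bs f \<tau> (Suc m) y = Bs f \<tau> m y + deriv \<tau> ((f^^m) y) * Ap f m y" by (simp add: Bs_def)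
  show ?case
    unfolding e1 e2 A B
    using DERIV_chain2[OF df IH(1)] DERIV_add[OF IH(2) DERIV_chain2[OF dt IH(1)]] IH(3)
    by (auto simp: DF_def algebra_simps)
qed

lemma piece_diff:
  assumes "piecewise_C1_alpha a f P" "piecewise_C1 \<tau> P" "I \<in> P" "z \<in> I"
  shows "f differentiable at z \<and> \<tau> differentiable at z"
  using assms unfolding piecewise_C1_alpha_def piecewise_C1_def by blast

lemma piece_open:
  assumes "interval_partition P" "I \<in> P" shows "open I"
proof -
  obtain a b where "I = {a<..<b}" using assms unfolding interval_partition_def by meson
  then show ?thesis by simp
qed

lemma cyl_open:
  assumes "piecewise_C1_alpha a f P" "piecewise_C1 \<tau> P" "interval_partition P"
    "\<forall>j<m. Is j \<in> P"
  shows "open {x. \<forall>j<m. (f^^j) x \<in> Is j} \<and> continuous_on {x. \<forall>j<m. (f^^j) x \<in> Is j} (f^^m)"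
  using assms(4)
proof (induction m)
  case 0
  then show ?case by (auto intro: continuous_intros)
next
  case (Suc m)
  have o: "open {x. \<forall>j<m. (f^^j) x \<in> Is j}" and c: "continuous_on {x. \<forall>j<m. (f^^j) x \<in> Is j} (f^^m)"
    using Suc by auto
  have eq: "{x. \<forall>j<Suc m. (f^^j) x \<in> Is j} = {x. \<forall>j<m. (f^^j) x \<in> Is j} \<inter> (f^^m) -` Is m"
    by (auto simp: less_Suc_eq)
  have "open (Is m)" using piece_open[OF assms(3)] Suc.prems by auto
  then have O: "open {x. \<forall>j<Suc m. (f^^j) x \<in> Is j}"
    unfolding eq by (rule continuous_open_preimage[OF c o])
  have "continuous_on {x. \<forall>j<Suc m. (f^^j) x \<in> Is j} (f^^Suc m)"
  proof (rule continuous_at_imp_continuous_on, intro ballI)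
    fix y assume y: "y \<in> {x. \<forall>j<Suc m. (f^^j) x \<in> Is j}"
    have "\<forall>j<Suc m. f differentiable at ((f^^j) y) \<and> \<tau> differentiable at ((f^^j) y)"
      using y Suc.prems piece_diff[OF assms(1,2)] by blast
    then have "DERIV (f^^Suc m) y :> Ap f (Suc m) y" using derivs by blast
    then show "isCont (f^^Suc m) y" by (rule DERIV_isCont)
  qed
  with O show ?case by blast
qed

lemma cyl_inj:
  assumes "injective_mod1_on_pieces f P" "\<forall>j<Suc m. Is j \<in> P"
    "\<forall>j<Suc m. (f^^j) y \<in> Is j" "\<forall>j<Suc m. (f^^j) y' \<in> Is j"
    "(f^^Suc m) y - (f^^Suc m) y' \<in> \<int>"
  shows "y = y'"
  using assms(2-5)
proof (induction m arbitrary: y y')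
  case 0
  have "y \<in> Is 0" "y' \<in> Is 0" "Is 0 \<in> P" "f y - f y' \<in> \<int>" using 0 by auto
  then show ?case using assms(1) unfolding injective_mod1_on_pieces_def by blast
next
  case (Suc m)
  have "(f^^Suc m) y = (f^^Suc m) y'"
    using assms(1) Suc.prems unfolding injective_mod1_on_pieces_def
    by (metis funpow.simps(2) o_apply lessI)
  then have "(f^^Suc m) y - (f^^Suc m) y' \<in> \<int>" by simp
  moreover have "\<forall>j<Suc m. Is j \<in> P" "\<forall>j<Suc m. (f^^j) y \<in> Is j" "\<forall>j<Suc m. (f^^j) y' \<in> Is j"
    using Suc.prems by auto
  ultimately show ?case using Suc.IH by blast
qed

lemma cyl_unfold:
  assumes "Q \<in> cylinders f P m"
  obtains Is where "\<forall>j<m. Is j \<in> P" "Q = {x. \<forall>j<m. (f^^j) x \<in> Is j}" "Q \<noteq> {}"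
proof -
  from assms obtain Is where "\<forall>j<m. Is j \<in> P" "Q = {x. \<forall>j<m. (f^^j) x \<in> Is j}" "Q \<noteq> {}"
    unfolding cylinders_def by blast
  then show ?thesis using that by blast
qed

lemma branch_eq:
  assumes "injective_mod1_on_pieces f P" "Q \<in> cylinders f P (Suc k)" "y \<in> Q"
    "(f^^Suc k) y - z \<in> \<int>"
  shows "branch f (Suc k) Q z = y"
proof -
  obtain Is where I: "\<forall>j<Suc k. Is j \<in> P" "Q = {x. \<forall>j<Suc k. (f^^j) x \<in> Is j}"
    by (rule cyl_unfold[OF assms(2)])
  show ?thesis unfolding branch_def
  proof (rule the_equality)
    show "y \<in> Q \<and> (f ^^ Suc k) y - z \<in> \<int>" using assms(3,4) by (rule conjI)
  next
    fix y' assume h: "y' \<in> Q \<and> (f ^^ Suc k) y' - z \<in> \<int>"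
    have "(f ^^ Suc k) y' - (f ^^ Suc k) y = ((f ^^ Suc k) y' - z) - ((f ^^ Suc k) y - z)" by simp
    also have "\<dots> \<in> \<int>" by (rule Ints_diff[OF conjunct2[OF h] assms(4)])
    finally have d: "(f ^^ Suc k) y' - (f ^^ Suc k) y \<in> \<int>" .
    have "\<forall>j<Suc k. (f^^j) y' \<in> Is j" "\<forall>j<Suc k. (f^^j) y \<in> Is j"
      using h assms(3) I(2) by blast+
    then show "y' = y" using cyl_inj[OF assms(1) I(1) _ _ d] by blast
  qed
qed

lemma branch_deriv:
  assumes "piecewise_C1_alpha a f P" "piecewise_C1 \<tau> P" "interval_partition P"
    "injective_mod1_on_pieces f P" "Q \<in> cylinders f P (Suc k)" "y \<in> Q"
    "(f^^Suc k) y - z \<in> \<int>" "Ap f (Suc k) y \<noteq> 0"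
  shows "DERIV (\<lambda>w. tau_n f \<tau> (Suc k) (branch f (Suc k) Q w)) z :> Bs f \<tau> (Suc k) y * inverse (Ap f (Suc k) y)"
proof -
  obtain Is where I: "\<forall>j<Suc k. Is j \<in> P" "Q = {x. \<forall>j<Suc k. (f^^j) x \<in> Is j}"
    by (rule cyl_unfold[OF assms(5)])
  define c where "c = (f^^Suc k) y - z"
  define F where "F = (\<lambda>t. (f^^Suc k) t - c)"
  have oc: "open Q" "continuous_on Q (f^^Suc k)" using cyl_open[OF assms(1-3) I(1)] I(2) by auto
  have dd: "\<forall>j<Suc k. f differentiable at ((f^^j) y) \<and> \<tau> differentiable at ((f^^j) y)"
    using assms(6) I piece_diff[OF assms(1,2)] by blast
  note D = derivs[OF dd]
  have dF: "DERIV F y :> Ap f (Suc k) y" unfolding F_def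
    using DERIV_diff[OF conjunct1[OF D] DERIV_const[of c "at y"]] by simp
  have cF: "continuous_on Q F" unfolding F_def by (intro continuous_intros oc)
  have gf: "branch f (Suc k) Q (F t) = t" if "t \<in> Q" for t
  proof -
    have "(f^^Suc k) t - F t \<in> \<int>" using assms(7) unfolding F_def c_def by simp
    then show ?thesis using branch_eq[OF assms(4,5) that] by blast
  qed
  have Fy: "F y = z" by (simp add: F_def c_def)
  have db: "DERIV (branch f (Suc k) Q) z :> inverse (Ap f (Suc k) y)"
    using inv_strong[OF dF assms(8) oc(1) assms(6) cF gf] Fy by simp
  have bz: "branch f (Suc k) Q z = y" using gf[OF assms(6)] Fy by simp
  have dt: "DERIV (tau_n f \<tau> (Suc k)) (branch f (Suc k) Q z) :> Bs f \<tau> (Suc k) y"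
    using D bz by simp
  show ?thesis using DERIV_chain2[OF dt db] .
qed


lemma cyl_facts:
  assumes "piecewise_C1_alpha a f P" "piecewise_C1 \<tau> P"
    and "\<forall>m. \<forall>Q\<in>cylinders f P m. \<forall>y\<in>Q. \<bar>deriv (f ^^ m) y\<bar> \<ge> exp (lam * real m)"
    and "Q \<in> cylinders f P m" "y \<in> Q"
  shows "\<bar>Ap f m y\<bar> \<ge> exp (lam * real m)"
proof -
  obtain Is where I: "\<forall>j<m. Is j \<in> P" "Q = {x. \<forall>j<m. (f^^j) x \<in> Is j}"
    by (rule cyl_unfold[OF assms(4)])
  have dd: "\<forall>j<m. f differentiable at ((f^^j) y) \<and> \<tau> differentiable at ((f^^j) y)"
    using assms(5) I piece_diff[OF assms(1,2)] by blast
  have "deriv (f^^m) y = Ap f m y" using derivs[OF dd] DERIV_imp_deriv by blast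
  then show ?thesis using assms(3,4,5) by metis
qed

theorem mainTheorem8:
  fixes \<alpha> lam C\<tau> :: real and f \<tau> :: "real \<Rightarrow> real" and P :: "real set set"
    and x :: real and n :: nat and Q1 Q2 :: "real set"
  assumes "0 < \<alpha>" "\<alpha> < 1"
    and "periodic1 f" "periodic1 \<tau>"
    and "interval_partition P"
    and "piecewise_C1_alpha \<alpha> f P"
    and "injective_mod1_on_pieces f P"
    and "lam > ln 2"
    and "\<forall>m. \<forall>Q\<in>cylinders f P m. \<forall>y\<in>Q. \<bar>deriv (f ^^ m) y\<bar> \<ge> exp (lam * real m)"
    and "piecewise_C1 \<tau> P"
    and "\<forall>m. \<forall>Q\<in>cylinders f P m. \<forall>z\<in>branch_dom f m Q.
           \<bar>deriv (\<lambda>w. tau_n f \<tau> m (branch f m Q w)) z\<bar> \<le> C\<tau>"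
    and "Q1 \<in> cylinders f P n" "Q2 \<in> cylinders f P n"
    and "x \<in> branch_dom f n Q1" "x \<in> branch_dom f n Q2"
    and "DFn f \<tau> n (branch f n Q1 x) ` cone (eta f \<tau> P)
           \<inter> DFn f \<tau> n (branch f n Q2 x) ` cone (eta f \<tau> P) = {(0, 0)}"
  shows "\<exists>C0 > 0. \<bar>deriv (\<lambda>w. tau_n f \<tau> n (branch f n Q1 w)) x
                   - deriv (\<lambda>w. tau_n f \<tau> n (branch f n Q2 w)) x\<bar> > C0"
proof -
  have lam0: "lam > 0" using assms(8) ln_gt_zero[of 2] by linarith
  have elam: "exp lam > 1" using lam0 by simp
  have ne: "\<Union>P \<noteq> {}"
  proof
    assume e: "\<Union>P = {}"
    have "UNIV - \<Union>P \<in> null_sets lborel" using assms(5) unfolding interval_partition_def by blast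
    then have "(UNIV::real set) \<in> null_sets lborel" unfolding e by simp
    then have "{0..1::real} \<in> null_sets lborel" by (rule null_sets_subset) auto
    then have "emeasure lborel {0..1::real} = 0" by (simp add: null_sets_def)
    then show False by simp
  qed
  have piece: "\<bar>deriv f y\<bar> \<ge> exp lam \<and> \<bar>deriv \<tau> y / deriv f y\<bar> \<le> C\<tau>" if yP: "y \<in> \<Union>P" for y
  proof -
    obtain I where I: "I \<in> P" "y \<in> I" using yP by blast
    have cyl: "I \<in> cylinders f P (Suc 0)"
      unfolding cylinders_def using I by (intro CollectI conjI exI[of _ "\<lambda>_. I"]) auto
    have A1: "Ap f (Suc 0) y = deriv f y" by (simp add: Ap_def)
    have B1: "Bs f \<tau> (Suc 0) y = deriv \<tau> y" by (simp add: Bs_def Ap_def)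
    have ge: "\<bar>deriv f y\<bar> \<ge> exp lam"
      using cyl_facts[OF assms(6,10,9) cyl I(2)] A1 by simp
    then have nz: "Ap f (Suc 0) y \<noteq> 0" using A1 elam by auto
    have fy: "(f^^Suc 0) y - f y \<in> \<int>" by simp
    have D: "DERIV (\<lambda>w. tau_n f \<tau> (Suc 0) (branch f (Suc 0) I w)) (f y) :> deriv \<tau> y * inverse (deriv f y)"
      using branch_deriv[OF assms(6,10,5,7) cyl I(2) fy nz] A1 B1 by simp
    have dom: "f y \<in> branch_dom f (Suc 0) I" unfolding branch_dom_def using I(2) by force
    have "\<bar>deriv (\<lambda>w. tau_n f \<tau> (Suc 0) (branch f (Suc 0) I w)) (f y)\<bar> \<le> C\<tau>"
      using assms(11) cyl dom by blast
    then have "\<bar>deriv \<tau> y / deriv f y\<bar> \<le> C\<tau>" using DERIV_imp_deriv[OF D] by (simp add: divide_inverse)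
    with ge show ?thesis by blast
  qed
  have num: "supnorm (\<lambda>x. deriv \<tau> x / deriv f x) P \<ge> 0"
  proof -
    obtain y where y: "y \<in> \<Union>P" using ne by blast
    have bdd: "bdd_above ((\<lambda>x. \<bar>deriv \<tau> x / deriv f x\<bar>) ` \<Union>P)"
      using piece by (intro bdd_aboveI2[of _ _ C\<tau>]) auto
    have "\<bar>deriv \<tau> y / deriv f y\<bar> \<le> Sup ((\<lambda>x. \<bar>deriv \<tau> x / deriv f x\<bar>) ` \<Union>P)"
      using bdd y by (intro cSup_upper) auto
    then show ?thesis unfolding supnorm_def by linarith
  qed
  have den: "supnorm (\<lambda>x. 1 / deriv f x) P < 1"
  proof -
    have "Sup ((\<lambda>x. \<bar>1 / deriv f x\<bar>) ` \<Union>P) \<le> inverse (exp lam)"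
    proof (rule cSup_least)
      show "(\<lambda>x. \<bar>1 / deriv f x\<bar>) ` \<Union>P \<noteq> {}" using ne by simp
    next
      fix r assume "r \<in> (\<lambda>x. \<bar>1 / deriv f x\<bar>) ` \<Union>P"
      then obtain y where y: "y \<in> \<Union>P" "r = \<bar>1 / deriv f y\<bar>" by blast
      have g: "\<bar>deriv f y\<bar> \<ge> exp lam" using piece[OF y(1)] by blast
      have "r = inverse \<bar>deriv f y\<bar>" using y(2) by (simp add: abs_inverse divide_inverse)
      also have "\<dots> \<le> inverse (exp lam)" using g by (intro le_imp_inverse_le) auto
      finally show "r \<le> inverse (exp lam)" .
    qed
    moreover have "inverse (exp lam) < 1" using elam by (simp add: inverse_less_1_iff)
    ultimately show ?thesis unfolding supnorm_def by linarith
  qed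
  have eta0: "eta f \<tau> P \<ge> 0" unfolding eta_def using num den by simp
  have c10: "(a, 0) \<in> cone (eta f \<tau> P)" for a using eta0 unfolding cone_def by simp
  show ?thesis
  proof (cases n)
    case 0
    have "(1,0) \<in> DFn f \<tau> n (branch f n Q1 x) ` cone (eta f \<tau> P)
           \<inter> DFn f \<tau> n (branch f n Q2 x) ` cone (eta f \<tau> P)"
      using c10 0 by auto
    then show ?thesis using assms(16) by simp
  next
    case (Suc k)
    obtain y1 where y1: "y1 \<in> Q1" "(f^^n) y1 - x \<in> \<int>" using assms(14) unfolding branch_dom_def by blast
    obtain y2 where y2: "y2 \<in> Q2" "(f^^n) y2 - x \<in> \<int>" using assms(15) unfolding branch_dom_def by blast
    have A1: "Ap f n y1 \<noteq> 0" using cyl_facts[OF assms(6,10,9,12) y1(1)] by (metis abs_zero exp_gt_zero not_le)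
    have A2: "Ap f n y2 \<noteq> 0" using cyl_facts[OF assms(6,10,9,13) y2(1)] by (metis abs_zero exp_gt_zero not_le)
    have b1: "branch f n Q1 x = y1" using branch_eq[OF assms(7), of Q1 k y1 x] assms(12) y1 Suc by simp
    have b2: "branch f n Q2 x = y2" using branch_eq[OF assms(7), of Q2 k y2 x] assms(13) y2 Suc by simp
    have d1: "deriv (\<lambda>w. tau_n f \<tau> n (branch f n Q1 w)) x = Bs f \<tau> n y1 * inverse (Ap f n y1)"
      using DERIV_imp_deriv[OF branch_deriv[OF assms(6,10,5,7), of Q1 k y1 x]] assms(12) y1 A1 Suc by simp
    have d2: "deriv (\<lambda>w. tau_n f \<tau> n (branch f n Q2 w)) x = Bs f \<tau> n y2 * inverse (Ap f n y2)"
      using DERIV_imp_deriv[OF branch_deriv[OF assms(6,10,5,7), of Q2 k y2 x]] assms(13) y2 A2 Suc by simp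
    obtain Is1 where I1: "\<forall>j<n. Is1 j \<in> P" "Q1 = {x. \<forall>j<n. (f^^j) x \<in> Is1 j}"
      by (rule cyl_unfold[OF assms(12)])
    obtain Is2 where I2: "\<forall>j<n. Is2 j \<in> P" "Q2 = {x. \<forall>j<n. (f^^j) x \<in> Is2 j}"
      by (rule cyl_unfold[OF assms(13)])
    have dd1: "\<forall>j<n. f differentiable at ((f^^j) y1) \<and> \<tau> differentiable at ((f^^j) y1)"
      using y1(1) I1 piece_diff[OF assms(6,10)] by blast
    have dd2: "\<forall>j<n. f differentiable at ((f^^j) y2) \<and> \<tau> differentiable at ((f^^j) y2)"
      using y2(1) I2 piece_diff[OF assms(6,10)] by blast
    have DF1: "DFn f \<tau> n y1 = (\<lambda>(u,v). (Ap f n y1 * u, Bs f \<tau> n y1 * u + v))" using derivs[OF dd1] by blast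
    have DF2: "DFn f \<tau> n y2 = (\<lambda>(u,v). (Ap f n y2 * u, Bs f \<tau> n y2 * u + v))" using derivs[OF dd2] by blast
    have neq: "Bs f \<tau> n y1 * inverse (Ap f n y1) \<noteq> Bs f \<tau> n y2 * inverse (Ap f n y2)"
    proof
      assume eq: "Bs f \<tau> n y1 * inverse (Ap f n y1) = Bs f \<tau> n y2 * inverse (Ap f n y2)"
      have p1: "(Ap f n y1, Bs f \<tau> n y1) = DFn f \<tau> n y1 (1, 0)" using DF1 by simp
      have "Bs f \<tau> n y2 * (Ap f n y1 / Ap f n y2) = Bs f \<tau> n y1"
      proof -
        have "Bs f \<tau> n y1 = Bs f \<tau> n y1 * inverse (Ap f n y1) * Ap f n y1" using A1 by simp
        also have "\<dots> = Bs f \<tau> n y2 * inverse (Ap f n y2) * Ap f n y1" using eq by simp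
        finally show ?thesis by (simp add: divide_inverse mult.commute mult.left_commute)
      qed
      then have p2: "(Ap f n y1, Bs f \<tau> n y1) = DFn f \<tau> n y2 (Ap f n y1 / Ap f n y2, 0)" using DF2 A2 by simp
      have "(Ap f n y1, Bs f \<tau> n y1) \<in> DFn f \<tau> n (branch f n Q1 x) ` cone (eta f \<tau> P)
           \<inter> DFn f \<tau> n (branch f n Q2 x) ` cone (eta f \<tau> P)"
        unfolding b1 b2 using p1 p2 c10 by (metis IntI image_eqI)
      then show False using assms(16) A1 by simp
    qed
    show ?thesis
      by (rule exI[of _ "\<bar>deriv (\<lambda>w. tau_n f \<tau> n (branch f n Q1 w)) x
                   - deriv (\<lambda>w. tau_n f \<tau> n (branch f n Q2 w)) x\<bar> / 2"])
         (use neq d1 d2 in auto)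
  qed
qed

end
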